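(* Let $p$ be an odd prime, $N=D_{2p^2}=\langle r,s\mid r^{p^2}=s^2=1,\ srs=r^{-1}\rangle$, and $\varphi_1,\varphi_2\in\mathrm{Aut}(N)$ defined by $\varphi_1(r)=r,\ \varphi_1(s)=rs$, $\varphi_2(r)=r^{p+1},\ \varphi_2(s)=s$. The semiregular cyclic subgroups of order $p^2$ of $\mathrm{Hol}(N)$ are exactly the subgroups $$\langle (r,\varphi_1^j\varphi_2^k)\rangle,\quad 0\le j<p^2,\ j\not\equiv -1\pmod p,\ 0\le k<p,$$ and there are $p^3-p^2$ of them.
   Context: $\mathrm{Hol}(N)=N\rtimes\mathrm{Aut}(N)$, with elements $(x,\varphi)$, product $(x,\varphi)(y,\psi)=(x\varphi(y),\varphi\psi)$, acting on $N$ by $(x,\varphi)\cdot n=x\varphi(n)$. A subgroup is semiregular if all stabilizers of points of $N$ under this action are trivial. *)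

theory Defs
  imports "HOL-Algebra.Algebra"
begin

text \<open>Dihedral group of order 2m: element (a,e) stands for r^a s^e, with a in {0..<m}
  and e = True meaning a factor s.  Multiplication: r^a s^e r^b s^f = r^(a +- b) s^(e+f).\<close>
definition dihedral :: "int \<Rightarrow> (int \<times> bool) monoid" where
  "dihedral m = \<lparr> carrier = {0..<m} \<times> UNIV,
     monoid.mult = (\<lambda>(a,e) (b,f). ((a + (if e then - b else b)) mod m, e \<noteq> f)),
     one = (0, False) \<rparr>"

definition dih_r :: "int \<Rightarrow> int \<times> bool" where "dih_r m = (1 mod m, False)"
definition dih_s :: "int \<times> bool" where "dih_s = (0, True)"

definition holomorph :: "('a, 'b) monoid_scheme \<Rightarrow> ('a \<times> ('a \<Rightarrow> 'a)) monoid" where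
  "holomorph N = \<lparr> carrier = carrier N \<times> auto N,
     monoid.mult = (\<lambda>(x,f) (y,g). (x \<otimes>\<^bsub>N\<^esub> f y, f \<otimes>\<^bsub>AutoGroup N\<^esub> g)),
     one = (\<one>\<^bsub>N\<^esub>, \<one>\<^bsub>AutoGroup N\<^esub>) \<rparr>"

definition hol_act :: "('a, 'b) monoid_scheme \<Rightarrow> 'a \<times> ('a \<Rightarrow> 'a) \<Rightarrow> 'a \<Rightarrow> 'a" where
  "hol_act N h n = fst h \<otimes>\<^bsub>N\<^esub> snd h n"

definition semiregular :: "('a, 'b) monoid_scheme \<Rightarrow> ('a \<times> ('a \<Rightarrow> 'a)) set \<Rightarrow> bool" where
  "semiregular N H \<longleftrightarrow>
     (\<forall>n \<in> carrier N. \<forall>h \<in> H. hol_act N h n = n \<longrightarrow> h = \<one>\<^bsub>holomorph N\<^esub>)"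

definition phi1 :: "int \<Rightarrow> (int \<times> bool \<Rightarrow> int \<times> bool)" where
  "phi1 p = (THE f. f \<in> auto (dihedral (p^2)) \<and> f (dih_r (p^2)) = dih_r (p^2)
       \<and> f dih_s = dih_r (p^2) \<otimes>\<^bsub>dihedral (p^2)\<^esub> dih_s)"

definition phi2 :: "int \<Rightarrow> (int \<times> bool \<Rightarrow> int \<times> bool)" where
  "phi2 p = (THE f. f \<in> auto (dihedral (p^2))
       \<and> f (dih_r (p^2)) = dih_r (p^2) [^]\<^bsub>dihedral (p^2)\<^esub> (nat p + 1)
       \<and> f dih_s = dih_s)"

end

theory Submission
  imports Defs "HOL-Number_Theory.Number_Theory"
begin


lemma dih_carrier: "carrier (dihedral m) = {0..<m} \<times> UNIV"
  by (simp add: dihedral_def)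
lemma dih_mult: "(a,e) \<otimes>\<^bsub>dihedral m\<^esub> (b,f) = ((a + (if e then - b else b)) mod m, e \<noteq> f)"
  by (simp add: dihedral_def)
lemma dih_one: "\<one>\<^bsub>dihedral m\<^esub> = (0, False)"
  by (simp add: dihedral_def)

lemma group_dih: assumes "m > 0" shows "group (dihedral m)"
proof (rule groupI)
  fix x y assume "x \<in> carrier (dihedral m)" "y \<in> carrier (dihedral m)"
  then show "x \<otimes>\<^bsub>dihedral m\<^esub> y \<in> carrier (dihedral m)"
    using assms by (cases x; cases y) (auto simp: dih_carrier dih_mult)
next
  show "\<one>\<^bsub>dihedral m\<^esub> \<in> carrier (dihedral m)" using assms by (simp add: dih_carrier dih_one)
next
  fix x y z assume "x \<in> carrier (dihedral m)" "y \<in> carrier (dihedral m)" "z \<in> carrier (dihedral m)"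
  then show "x \<otimes>\<^bsub>dihedral m\<^esub> y \<otimes>\<^bsub>dihedral m\<^esub> z = x \<otimes>\<^bsub>dihedral m\<^esub> (y \<otimes>\<^bsub>dihedral m\<^esub> z)"
    apply (cases x; cases y; cases z)
    apply (simp add: dih_mult)
    apply (simp add: mod_simps split: if_split)
    apply (simp add: algebra_simps)
    done
next
  fix x assume "x \<in> carrier (dihedral m)"
  then show "\<one>\<^bsub>dihedral m\<^esub> \<otimes>\<^bsub>dihedral m\<^esub> x = x"
    by (cases x) (auto simp: dih_carrier dih_mult dih_one)
next
  fix x assume x: "x \<in> carrier (dihedral m)"
  obtain a e where [simp]: "x = (a,e)" by fastforce
  show "\<exists>y\<in>carrier (dihedral m). y \<otimes>\<^bsub>dihedral m\<^esub> x = \<one>\<^bsub>dihedral m\<^esub>"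
  proof (cases e)
    case True
    then show ?thesis using x by (intro bexI[of _ "(a,True)"]) (auto simp: dih_carrier dih_mult dih_one)
  next
    case False
    then show ?thesis using x assms by (intro bexI[of _ "((-a) mod m,False)"]) (auto simp: dih_carrier dih_mult dih_one mod_simps)
  qed
qed



lemma hol_carrier: "carrier (holomorph N) = carrier N \<times> auto N"
  by (simp add: holomorph_def)
lemma hol_mult: "(x,f) \<otimes>\<^bsub>holomorph N\<^esub> (y,g) = (x \<otimes>\<^bsub>N\<^esub> f y, f \<otimes>\<^bsub>AutoGroup N\<^esub> g)"
  by (simp add: holomorph_def)
lemma hol_one: "\<one>\<^bsub>holomorph N\<^esub> = (\<one>\<^bsub>N\<^esub>, \<one>\<^bsub>AutoGroup N\<^esub>)"
  by (simp add: holomorph_def)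

lemma auto_carrier: "carrier (AutoGroup N) = auto N"
  by (simp add: AutoGroup_def)
lemma auto_mult: "f \<in> auto N \<Longrightarrow> g \<in> auto N \<Longrightarrow> f \<otimes>\<^bsub>AutoGroup N\<^esub> g = compose (carrier N) f g"
  by (auto simp: AutoGroup_def BijGroup_def auto_def)
lemma auto_one: "\<one>\<^bsub>AutoGroup N\<^esub> = (\<lambda>x\<in>carrier N. x)"
  by (simp add: AutoGroup_def BijGroup_def)

lemma auto_hom: "f \<in> auto N \<Longrightarrow> f \<in> hom N N"
  by (simp add: auto_def)

lemma auto_mult_apply: "f \<in> auto N \<Longrightarrow> g \<in> auto N \<Longrightarrow> z \<in> carrier N \<Longrightarrow> (f \<otimes>\<^bsub>AutoGroup N\<^esub> g) z = f (g z)"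
  by (simp add: auto_mult compose_eq)

lemma group_hol: assumes G: "group N" shows "group (holomorph N)"
proof -
  interpret N: group N by (rule G)
  interpret A: group "AutoGroup N" by (rule N.AutoGroup)
  have fc: "f y \<in> carrier N" if "f \<in> auto N" "y \<in> carrier N" for f y
    using that by (auto simp: auto_def hom_def)
  have fm: "f (x \<otimes>\<^bsub>N\<^esub> y) = f x \<otimes>\<^bsub>N\<^esub> f y" if "f \<in> auto N" "x \<in> carrier N" "y \<in> carrier N" for f x y
    using that by (auto simp: auto_def hom_def)
  have ac: "f \<otimes>\<^bsub>AutoGroup N\<^esub> g \<in> auto N" if "f \<in> auto N" "g \<in> auto N" for f g
    using that A.m_closed by (simp add: auto_carrier)
  show ?thesis
  proof (rule groupI)
    fix a b assume "a \<in> carrier (holomorph N)" "b \<in> carrier (holomorph N)"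
    then show "a \<otimes>\<^bsub>holomorph N\<^esub> b \<in> carrier (holomorph N)"
      by (cases a; cases b) (auto simp: hol_carrier hol_mult fc ac)
  next
    show "\<one>\<^bsub>holomorph N\<^esub> \<in> carrier (holomorph N)"
      using A.one_closed by (simp add: hol_carrier hol_one auto_carrier)
  next
    fix a b c assume "a \<in> carrier (holomorph N)" "b \<in> carrier (holomorph N)" "c \<in> carrier (holomorph N)"
    then show "a \<otimes>\<^bsub>holomorph N\<^esub> b \<otimes>\<^bsub>holomorph N\<^esub> c = a \<otimes>\<^bsub>holomorph N\<^esub> (b \<otimes>\<^bsub>holomorph N\<^esub> c)"
      apply (cases a; cases b; cases c)
      apply (simp add: hol_carrier hol_mult)
      apply (simp add: fm fc auto_mult_apply N.m_assoc A.m_assoc flip: auto_carrier)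
      done
  next
    fix a assume "a \<in> carrier (holomorph N)"
    then show "\<one>\<^bsub>holomorph N\<^esub> \<otimes>\<^bsub>holomorph N\<^esub> a = a"
    proof (cases a)
      case (Pair x f)
      then have x: "x \<in> carrier N" and f: "f \<in> auto N" using \<open>a \<in> _\<close> by (auto simp: hol_carrier)
      have "\<one>\<^bsub>AutoGroup N\<^esub> x = x" using x by (simp add: auto_one)
      then show ?thesis using Pair x f A.l_one[of f] fc[OF f x]
        by (simp add: hol_one hol_mult auto_carrier)
    qed
  next
    fix a assume a: "a \<in> carrier (holomorph N)"
    obtain x f where [simp]: "a = (x,f)" by fastforce
    have x: "x \<in> carrier N" and f: "f \<in> auto N" using a by (auto simp: hol_carrier)
    define g where "g = inv\<^bsub>AutoGroup N\<^esub> f"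
    have g: "g \<in> auto N" using f A.inv_closed by (simp add: g_def auto_carrier)
    have gf: "g \<otimes>\<^bsub>AutoGroup N\<^esub> f = \<one>\<^bsub>AutoGroup N\<^esub>" using f A.l_inv by (simp add: g_def auto_carrier)
    have "g (inv\<^bsub>N\<^esub> x) \<otimes>\<^bsub>N\<^esub> g x = g (inv\<^bsub>N\<^esub> x \<otimes>\<^bsub>N\<^esub> x)" by (rule fm[OF g N.inv_closed[OF x] x, symmetric])
    also have "\<dots> = g \<one>\<^bsub>N\<^esub>" using x by simp
    also have "\<dots> = \<one>\<^bsub>N\<^esub>"
      using g G by (simp add: auto_def group_hom.hom_one group_hom_axioms_def group_hom_def)
    finally have e: "g (inv\<^bsub>N\<^esub> x) \<otimes>\<^bsub>N\<^esub> g x = \<one>\<^bsub>N\<^esub>" .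
    show "\<exists>b\<in>carrier (holomorph N). b \<otimes>\<^bsub>holomorph N\<^esub> a = \<one>\<^bsub>holomorph N\<^esub>"
      using x g gf e by (intro bexI[of _ "(g (inv\<^bsub>N\<^esub> x), g)"]) (auto simp: hol_carrier hol_mult hol_one fc)
  qed
qed



definition aff :: "int \<Rightarrow> int \<Rightarrow> int \<Rightarrow> (int \<times> bool \<Rightarrow> int \<times> bool)" where
  "aff m u b = (\<lambda>x\<in>{0..<m}\<times>UNIV. if snd x then ((u * fst x + b) mod m, True) else ((u * fst x) mod m, False))"

lemma mod_helper: "(u * (x mod m) + b) mod m = (u * x + b) mod (m::int)"
  by (rule mod_add_cong[OF mod_mult_right_eq refl])

lemma aff_apply: "0 \<le> a \<Longrightarrow> a < m \<Longrightarrow> aff m u b (a,e) = (if e then ((u * a + b) mod m, True) else ((u * a) mod m, False))"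
  by (simp add: aff_def)

lemma aff_mod: "aff m (u mod m) (b mod m) = aff m u b"
proof -
  have h2: "(u mod m * a) mod m = (u*a) mod m" for a
    by (simp add: mod_simps)
  have h1: "(u mod m * a + b mod m) mod m = (u*a+b) mod m" for a
    by (rule mod_add_cong[OF h2]) simp
  show ?thesis unfolding aff_def by (intro ext) (simp add: h1 h2)
qed

lemma aff_cong: "[u = u'] (mod m) \<Longrightarrow> [b = b'] (mod m) \<Longrightarrow> aff m u b = aff m u' b'"
  by (metis aff_mod cong_def)

lemma aff_eqD: assumes "aff m u b = aff m u' b'" "m > 1"
  shows "[u = u'] (mod m)" "[b = b'] (mod m)"
proof -
  have "aff m u b (1,False) = aff m u' b' (1,False)" "aff m u b (0,True) = aff m u' b' (0,True)"
    using assms(1) by auto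
  then show "[u = u'] (mod m)" "[b = b'] (mod m)" using assms(2) by (auto simp: aff_apply cong_def)
qed

lemma aff_ext: "aff m u b \<in> extensional (carrier (dihedral m))"
  by (simp add: aff_def dih_carrier)

lemma aff_in_auto: assumes "coprime u m" "m > 0"
  shows "aff m u b \<in> auto (dihedral m)"
proof -
  let ?C = "carrier (dihedral m)"
  have maps: "aff m u b x \<in> ?C" if "x \<in> ?C" for x
    using that assms by (cases x) (auto simp: dih_carrier aff_apply)
  have inj: "inj_on (aff m u b) ?C"
  proof (rule inj_onI)
    fix x y assume x: "x \<in> ?C" and y: "y \<in> ?C" and eq: "aff m u b x = aff m u b y"
    obtain a e where xa: "x = (a,e)" by fastforce
    obtain a' e' where ya: "y = (a',e')" by fastforce
    have ra: "0 \<le> a" "a < m" "0 \<le> a'" "a' < m" using x y by (auto simp: xa ya dih_carrier)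
    have ee: "e = e'" using arg_cong[OF eq, of snd] ra by (simp add: xa ya aff_apply split: if_splits)
    have "[u * a = u * a'] (mod m)"
    proof (cases e)
      case True
      then have "[u * a + b = u * a' + b] (mod m)" using eq ra ee by (simp add: xa ya aff_apply cong_def)
      then show ?thesis by (simp add: cong_add_rcancel)
    next
      case False
      then show ?thesis using eq ra ee by (simp add: xa ya aff_apply cong_def)
    qed
    then have "[a = a'] (mod m)" using cong_mult_lcancel[OF assms(1)] by simp
    then have "a = a'" using ra by (simp add: cong_def)
    then show "x = y" using ee xa ya by simp
  qed
  have fin: "finite ?C" by (simp add: dih_carrier)
  have bij: "bij_betw (aff m u b) ?C ?C"
  proof -
    have "aff m u b ` ?C \<subseteq> ?C" using maps by auto
    then have "aff m u b ` ?C = ?C" by (rule endo_inj_surj[OF fin _ inj])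
    then show ?thesis using inj by (simp add: bij_betw_def)
  qed
  have hom: "aff m u b \<in> hom (dihedral m) (dihedral m)"
  proof (rule homI)
    fix x assume "x \<in> ?C" then show "aff m u b x \<in> ?C" by (rule maps)
  next
    fix x y assume x: "x \<in> ?C" and y: "y \<in> ?C"
    obtain a e where xa: "x = (a,e)" by fastforce
    obtain a' e' where ya: "y = (a',e')" by fastforce
    show "aff m u b (x \<otimes>\<^bsub>dihedral m\<^esub> y) = aff m u b x \<otimes>\<^bsub>dihedral m\<^esub> aff m u b y"
      using x y assms(2) unfolding xa ya
      apply (cases e; cases e')
         apply (simp_all add: dih_carrier dih_mult aff_apply mod_helper mod_simps)
       apply (simp_all add: algebra_simps)
      done
  qed
  show ?thesis using hom bij aff_ext by (simp add: auto_def Bij_def)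
qed



lemma auto_bij: "f \<in> auto N \<Longrightarrow> bij_betw f (carrier N) (carrier N)"
  by (simp add: auto_def Bij_def)
lemma auto_ext: "f \<in> auto N \<Longrightarrow> f \<in> extensional (carrier N)"
  by (simp add: auto_def Bij_def)

lemma auto_is_aff:
  assumes m: "m > 2" and f: "f \<in> auto (dihedral m)"
  shows "f = aff m (fst (f (1,False))) (fst (f (0,True)))"
proof -
  let ?N = "dihedral m"
  let ?C = "carrier ?N"
  interpret h: group_hom ?N ?N f
    using m f by (simp add: group_hom_def group_hom_axioms_def group_dih auto_hom)
  have bij: "bij_betw f ?C ?C" using f by (rule auto_bij)
  have inj: "inj_on f ?C" and surj: "f ` ?C = ?C" using bij by (auto simp: bij_betw_def)
  have r: "(1,False) \<in> ?C" and s: "(0,True) \<in> ?C" using m by (auto simp: dih_carrier)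
  obtain u e1 where fr: "f (1,False) = (u,e1)" by fastforce
  obtain b e2 where fs: "f (0,True) = (b,e2)" by fastforce
  have uc: "(u,e1) \<in> ?C" using fr r by (metis h.hom_closed)
  have bc: "(b,e2) \<in> ?C" using fs s by (metis h.hom_closed)
  have f0: "f (0,False) = (0,False)" using h.hom_one by (simp add: dih_one)
  have "\<not> e1"
  proof
    assume e1: e1
    have "f ((1,False) \<otimes>\<^bsub>?N\<^esub> (1,False)) = (u,e1) \<otimes>\<^bsub>?N\<^esub> (u,e1)"
      using h.hom_mult[OF r r] fr by simp
    also have "\<dots> = (0,False)" using e1 by (simp add: dih_mult)
    finally have "f (2,False) = f (0,False)" using m f0 by (simp add: dih_mult)
    moreover have "(2::int,False) \<in> ?C" "(0::int,False) \<in> ?C" using m by (auto simp: dih_carrier)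
    ultimately have "(2::int,False) = (0,False)"
      using inj by (metis inj_on_def)
    then show False by simp
  qed
  then have fr': "f (1,False) = (u,False)" using fr by simp
  have rot: "f (int a, False) = ((u * int a) mod m, False)" if "int a < m" for a :: nat
    using that
  proof (induction a)
    case 0 then show ?case using f0 by simp
  next
    case (Suc a)
    have ac: "(int a, False) \<in> ?C" using Suc.prems by (auto simp: dih_carrier)
    have "(int (Suc a), False) = (int a, False) \<otimes>\<^bsub>?N\<^esub> (1,False)"
      using Suc.prems by (simp add: dih_mult)
    then have "f (int (Suc a), False) = f (int a, False) \<otimes>\<^bsub>?N\<^esub> (u,False)"
      using h.hom_mult[OF ac r] fr' by simp
    also have "\<dots> = (((u * int a) mod m + u) mod m, False)"
      using Suc by (simp add: dih_mult)
    also have "\<dots> = ((u * int (Suc a)) mod m, False)"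
      by (simp add: mod_simps algebra_simps)
    finally show ?case .
  qed
  have rot': "f (a, False) = ((u * a) mod m, False)" if "0 \<le> a" "a < m" for a
    using rot[of "nat a"] that by simp
  have "e2"
  proof (rule ccontr)
    assume ne: "\<not> e2"
    have allF: "snd (f x) = False" if "x \<in> ?C" for x
    proof -
      obtain a e where xa: "x = (a,e)" by fastforce
      have ra: "0 \<le> a" "a < m" using that xa by (auto simp: dih_carrier)
      show ?thesis
      proof (cases e)
        case True
        have ac: "(a, False) \<in> ?C" using ra by (auto simp: dih_carrier)
        have "x = (a,False) \<otimes>\<^bsub>?N\<^esub> (0,True)" using xa True ra by (simp add: dih_mult)
        then have "f x = f (a,False) \<otimes>\<^bsub>?N\<^esub> (b,e2)" using h.hom_mult[OF ac s] fs by simp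
        then show ?thesis using ne rot'[OF ra] by (simp add: dih_mult)
      next
        case False
        then show ?thesis using xa rot'[OF ra] by simp
      qed
    qed
    have "(0,True) \<in> f ` ?C" using surj s by simp
    then show False
    proof (rule imageE)
      fix x assume a1: "(0,True) = f x" and a2: "x \<in> ?C"
      have "snd (f x) = True" by (simp flip: a1)
      then show False using allF[OF a2] by simp
    qed
  qed
  then have fs': "f (0,True) = (b,True)" using fs by simp
  have refl: "f (a, True) = ((u * a + b) mod m, True)" if "0 \<le> a" "a < m" for a
  proof -
    have ac: "(a, False) \<in> ?C" using that by (auto simp: dih_carrier)
    have "(a,True) = (a,False) \<otimes>\<^bsub>?N\<^esub> (0,True)" using that by (simp add: dih_mult)
    then have "f (a,True) = ((u * a) mod m, False) \<otimes>\<^bsub>?N\<^esub> (b,True)"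
      using h.hom_mult[OF ac s] fs' rot'[OF that] by simp
    then show ?thesis by (simp add: dih_mult mod_simps)
  qed
  show ?thesis
  proof (rule extensionalityI[OF auto_ext[OF f] aff_ext])
    fix x assume "x \<in> ?C"
    then obtain a e where xa: "x = (a,e)" and ra: "0 \<le> a" "a < m" by (cases x) (auto simp: dih_carrier)
    show "f x = aff m (fst (f (1, False))) (fst (f (0, True))) x"
      using ra rot' refl by (cases e) (simp_all add: xa fr' fs' aff_apply)
  qed
qed



definition geo :: "int \<Rightarrow> nat \<Rightarrow> int" where "geo u n = (\<Sum>i<n. u^i)"

lemma geo_0 [simp]: "geo u 0 = 0" by (simp add: geo_def)
lemma geo_Suc: "geo u (Suc n) = geo u n + u^n" by (simp add: geo_def)

lemma aff_comp:
  assumes m: "m > 0" and f: "aff m u b \<in> auto (dihedral m)" and g: "aff m v c \<in> auto (dihedral m)"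
  shows "aff m u b \<otimes>\<^bsub>AutoGroup (dihedral m)\<^esub> aff m v c = aff m (u * v) (u * c + b)"
proof -
  have "compose (carrier (dihedral m)) (aff m u b) (aff m v c) = aff m (u * v) (u * c + b)"
  proof (rule extensionalityI[OF _ aff_ext])
    show "compose (carrier (dihedral m)) (aff m u b) (aff m v c) \<in> extensional (carrier (dihedral m))"
      by (simp add: compose_def)
  next
    fix x assume "x \<in> carrier (dihedral m)"
    then obtain a e where xa: "x = (a,e)" and ra: "0 \<le> a" "a < m" by (cases x) (auto simp: dih_carrier)
    show "compose (carrier (dihedral m)) (aff m u b) (aff m v c) x = aff m (u * v) (u * c + b) x"
      using ra m by (cases e) (simp_all add: xa compose_eq dih_carrier aff_apply mod_helper mod_simps, simp_all add: algebra_simps)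
  qed
  then show ?thesis using f g by (simp add: auto_mult)
qed

lemma aff_one: assumes "m > 0" shows "\<one>\<^bsub>AutoGroup (dihedral m)\<^esub> = aff m 1 0"
proof (rule extensionalityI[OF _ aff_ext])
  show "\<one>\<^bsub>AutoGroup (dihedral m)\<^esub> \<in> extensional (carrier (dihedral m))" by (simp add: auto_one)
next
  fix x assume "x \<in> carrier (dihedral m)"
  then obtain a e where xa: "x = (a,e)" and ra: "0 \<le> a" "a < m" by (cases x) (auto simp: dih_carrier)
  show "\<one>\<^bsub>AutoGroup (dihedral m)\<^esub> x = aff m 1 0 x"
    using ra by (cases e) (simp_all add: xa auto_one dih_carrier aff_apply)
qed

lemma aff_pow:
  assumes m: "m > 0" and f: "aff m u b \<in> auto (dihedral m)"
  shows "aff m u b [^]\<^bsub>AutoGroup (dihedral m)\<^esub> n = aff m (u^n) (b * geo u n)"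
proof (induction n)
  case 0 then show ?case using aff_one[OF m] by simp
next
  case (Suc n)
  interpret N: group "dihedral m" using m by (rule group_dih)
  interpret A: group "AutoGroup (dihedral m)" by (rule N.AutoGroup)
  have c: "aff m (u^n) (b * geo u n) \<in> auto (dihedral m)"
    using A.nat_pow_closed[of "aff m u b" n] f Suc.IH by (simp add: auto_carrier)
  have "aff m u b [^]\<^bsub>AutoGroup (dihedral m)\<^esub> Suc n = aff m (u^n) (b * geo u n) \<otimes>\<^bsub>AutoGroup (dihedral m)\<^esub> aff m u b"
    using Suc.IH by simp
  also have "\<dots> = aff m (u^Suc n) (b * geo u (Suc n))"
    using aff_comp[OF m c f] by (simp add: geo_Suc algebra_simps)
  finally show ?case .
qed

lemma hol_pow_rot:
  assumes m: "m > 0" and g: "((c,False), aff m u b) \<in> carrier (holomorph (dihedral m))"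
  shows "((c,False), aff m u b) [^]\<^bsub>holomorph (dihedral m)\<^esub> n
         = (((c * geo u n) mod m, False), aff m (u^n) (b * geo u n))"
proof (induction n)
  case 0 then show ?case using aff_one[OF m] by (simp add: hol_one dih_one)
next
  case (Suc n)
  interpret N: group "dihedral m" using m by (rule group_dih)
  interpret H: group "holomorph (dihedral m)" by (rule group_hol[OF N.is_group])
  have f: "aff m u b \<in> auto (dihedral m)" and cr: "0 \<le> c" "c < m" using g by (auto simp: hol_carrier dih_carrier)
  have c: "aff m (u^n) (b * geo u n) \<in> auto (dihedral m)"
    using H.nat_pow_closed[OF g, of n] Suc.IH by (simp add: hol_carrier)
  have "((c,False), aff m u b) [^]\<^bsub>holomorph (dihedral m)\<^esub> Suc n =
     (((c * geo u n) mod m, False), aff m (u^n) (b * geo u n)) \<otimes>\<^bsub>holomorph (dihedral m)\<^esub> ((c,False), aff m u b)"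
    using Suc.IH by simp
  also have "\<dots> = (((c * geo u (Suc n)) mod m, False), aff m (u^Suc n) (b * geo u (Suc n)))"
    using aff_comp[OF m c f] cr by (simp add: hol_mult aff_apply dih_mult geo_Suc mod_simps algebra_simps)
  finally show ?case .
qed

lemma hol_pow_refl:
  assumes m: "m > 2" and g: "((c,True), f) \<in> carrier (holomorph (dihedral m))"
  shows "snd (fst (((c,True), f) [^]\<^bsub>holomorph (dihedral m)\<^esub> (n::nat))) = odd n"
proof (induction n)
  case 0 then show ?case by (simp add: hol_one dih_one)
next
  case (Suc n)
  interpret N: group "dihedral m" using m by (intro group_dih) simp
  interpret H: group "holomorph (dihedral m)" by (rule group_hol[OF N.is_group])
  obtain x h where xh: "((c,True), f) [^]\<^bsub>holomorph (dihedral m)\<^esub> n = (x,h)" by fastforce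
  have hc: "(x,h) \<in> carrier (holomorph (dihedral m))" using H.nat_pow_closed[OF g, of n] xh by simp
  then have h: "h \<in> auto (dihedral m)" by (simp add: hol_carrier)
  have cr: "0 \<le> c" "c < m" using g by (auto simp: hol_carrier dih_carrier)
  have hc2: "snd (h (c,True)) = True"
    using auto_is_aff[OF m h] cr by (metis aff_apply snd_conv)
  obtain y ey where hy: "h (c,True) = (y,ey)" by fastforce
  obtain a ex where xa: "x = (a, ex)" by fastforce
  have "((c,True), f) [^]\<^bsub>holomorph (dihedral m)\<^esub> Suc n = (x,h) \<otimes>\<^bsub>holomorph (dihedral m)\<^esub> ((c,True), f)"
    using xh by simp
  then show ?case using Suc.IH xh hc2 hy by (simp add: hol_mult xa dih_mult)
qed

lemma hol_act_rot:
  assumes "0 \<le> d" "d < m" "0 \<le> a" "a < m"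
  shows "hol_act (dihedral m) ((d,False), aff m v e) (a,False) = ((d + v * a) mod m, False)"
    and "hol_act (dihedral m) ((d,False), aff m v e) (a,True) = ((d + v * a + e) mod m, True)"
  using assms by (simp_all add: hol_act_def aff_apply dih_mult mod_simps add.assoc)



lemma NT1: "(p::int)^2 dvd ((1 + t*p)^n - 1 - int n * t * p)"
proof (induction n)
  case 0 then show ?case by simp
next
  case (Suc n)
  then obtain k where k: "(1 + t*p)^n - 1 - int n * t * p = p^2 * k" by (elim dvdE)
  have "(1 + t*p)^Suc n - 1 - int (Suc n) * t * p = (1 + t*p) * ((1 + t*p)^n - 1 - int n * t * p) + p^2 * (int n * t^2)"
    by (simp add: algebra_simps power2_eq_square)
  also have "\<dots> = p^2 * ((1 + t*p) * k + int n * t^2)" by (simp only: k) (simp add: algebra_simps)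
  finally show ?case by simp
qed

lemma NT2: "(p::int)^2 dvd (2 * geo (1 + t*p) n - 2 * int n - t * p * int n * (int n - 1))"
proof (induction n)
  case 0 then show ?case by simp
next
  case (Suc n)
  have "2 * geo (1 + t*p) (Suc n) - 2 * int (Suc n) - t * p * int (Suc n) * (int (Suc n) - 1)
     = (2 * geo (1 + t*p) n - 2 * int n - t * p * int n * (int n - 1)) + 2 * ((1 + t*p)^n - 1 - int n * t * p)"
    by (simp add: geo_Suc algebra_simps)
  then show ?case using Suc.IH NT1[of p t n] by (metis dvd_add dvd_mult)
qed

lemma odd_prime_dvd2: assumes "Factorial_Ring.prime (p::int)" "odd p" "p dvd 2 * x" shows "p dvd x"
proof -
  have "\<not> p dvd 2"
  proof
    assume "p dvd 2"
    then have "p \<le> 2" by (simp add: zdvd_imp_le)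
    moreover have "p > 1" using assms(1) prime_gt_1_int by blast
    ultimately have "p = 2" by simp
    then show False using assms(2) by simp
  qed
  then show ?thesis using assms prime_dvd_mult_iff by blast
qed

lemma odd_prime_sq_dvd2: assumes "Factorial_Ring.prime (p::int)" "odd p" "p^2 dvd 2 * x" shows "p^2 dvd x"
proof -
  have "coprime 2 p" using assms(2) by (metis coprime_left_2_iff_odd)
  then have "coprime 2 (p^2)" by simp
  then show ?thesis using assms(3) by (simp add: coprime_dvd_mult_right_iff)
qed

lemma NT3:
  assumes p: "Factorial_Ring.prime (p::int)" "odd p" and u: "p dvd (u - 1)"
  shows "p^2 dvd (geo u n - geo u n') \<longleftrightarrow> p^2 dvd (int n - int n')"
proof -
  obtain t where t: "u = 1 + t*p" using u by (metis dvd_def mult.commute diff_add_cancel add.commute)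
  define D where "D = geo u n - geo u n'"
  define E where "E = int n - int n'"
  have key: "p^2 dvd (2 * D - 2 * E - t * p * E * (int n + int n' - 1))"
  proof -
    have "2 * D - 2 * E - t * p * E * (int n + int n' - 1) =
      (2 * geo (1 + t*p) n - 2 * int n - t * p * int n * (int n - 1)) -
      (2 * geo (1 + t*p) n' - 2 * int n' - t * p * int n' * (int n' - 1))"
      by (simp add: D_def E_def t algebra_simps)
    then show ?thesis using NT2[of p t n] NT2[of p t n'] by (metis dvd_diff)
  qed
  define Y where "Y = t * p * E * (int n + int n' - 1)"
  have key': "p^2 dvd (2 * D - 2 * E - Y)" using key by (simp add: Y_def)
  have pE: "p dvd E \<Longrightarrow> p^2 dvd Y"
    unfolding Y_def by (elim dvdE) (simp add: power2_eq_square)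
  have sq: "p^2 dvd x \<Longrightarrow> p dvd x" for x
    by (metis dvd_mult_left power2_eq_square)
  show ?thesis unfolding D_def[symmetric] E_def[symmetric]
  proof
    assume "p^2 dvd D"
    then have "p^2 dvd 2 * D" by simp
    have e1: "2 * E + Y = 2 * D - (2 * D - 2 * E - Y)" by simp
    have h: "p^2 dvd 2 * E + Y" unfolding e1 using \<open>p^2 dvd 2 * D\<close> key' by (rule dvd_diff)
    then have "p dvd 2 * E + Y" by (rule sq)
    moreover have "p dvd Y" unfolding Y_def by simp
    ultimately have "p dvd 2 * E" by (simp add: dvd_add_left_iff)
    then have "p dvd E" using odd_prime_dvd2 p by blast
    then have "p^2 dvd Y" by (rule pE)
    then have "p^2 dvd 2 * E" using h by (simp add: dvd_add_left_iff)
    then show "p^2 dvd E" using odd_prime_sq_dvd2 p by blast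
  next
    assume "p^2 dvd E"
    then have "p dvd E" by (rule sq)
    then have "p^2 dvd Y" by (rule pE)
    have "p^2 dvd (2 * D - 2 * E - Y) + 2 * E + Y" using key' \<open>p^2 dvd E\<close> \<open>p^2 dvd Y\<close> by (intro dvd_add) auto
    then have "p^2 dvd 2 * D" by simp
    then show "p^2 dvd D" using odd_prime_sq_dvd2 p by blast
  qed
qed



lemma sq_dvd_imp_dvd: "(p::int)^2 dvd x \<Longrightarrow> p dvd x"
  by (metis dvd_mult_left power2_eq_square)

lemma NT4: assumes p: "Factorial_Ring.prime (p::int)" "odd p" and u: "p dvd (u - 1)"
  shows "p dvd (geo u n - int n)"
proof -
  obtain t where t: "u = 1 + t*p" using u by (metis dvd_def mult.commute diff_add_cancel add.commute)
  have "p dvd (2 * geo (1 + t*p) n - 2 * int n - t * p * int n * (int n - 1))"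
    using NT2[of p t n] by (rule sq_dvd_imp_dvd)
  moreover have "p dvd t * p * int n * (int n - 1)" by simp
  ultimately have "p dvd (2 * geo (1 + t*p) n - 2 * int n - t * p * int n * (int n - 1)) + t * p * int n * (int n - 1)"
    by (rule dvd_add)
  then have "p dvd 2 * (geo u n - int n)" by (simp add: t algebra_simps)
  then show ?thesis using odd_prime_dvd2 p by blast
qed

lemma NT6: assumes u: "(p::int) dvd (u - 1)" shows "p dvd (u^n - 1)"
proof -
  obtain t where t: "u = 1 + t*p" using u by (metis dvd_def mult.commute diff_add_cancel add.commute)
  have "p dvd ((1 + t*p)^n - 1 - int n * t * p)" using NT1[of p t n] by (rule sq_dvd_imp_dvd)
  moreover have "p dvd int n * t * p" by simp
  ultimately have "p dvd ((1 + t*p)^n - 1 - int n * t * p) + int n * t * p" by (rule dvd_add)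
  then show ?thesis by (simp add: t)
qed

lemma NT5: assumes u: "(p::int) dvd (u - 1)" and n: "p dvd int n" shows "p^2 dvd (u^n - 1)"
proof -
  obtain t where t: "u = 1 + t*p" using u by (metis dvd_def mult.commute diff_add_cancel add.commute)
  obtain k where k: "int n = p * k" using n by (elim dvdE)
  have e: "int n * t * p = p^2 * (k*t)" unfolding k by (simp add: power2_eq_square algebra_simps)
  have "p^2 dvd int n * t * p" unfolding e by (rule dvd_triv_left)
  then have "p^2 dvd ((1 + t*p)^n - 1 - int n * t * p) + int n * t * p" using NT1[of p t n] by (intro dvd_add)
  then show ?thesis by (simp add: t)
qed

lemma fermat_int:
  assumes p: "Factorial_Ring.prime (p::int)" and h: "p dvd (u^(nat p * nat p) - 1)"
  shows "p dvd (u - 1)"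
proof -
  define P where "P = nat p"
  have p0: "p > 0" using p prime_gt_0_int by blast
  then have pP: "p = int P" by (simp add: P_def)
  have Pp: "Factorial_Ring.prime P" using p pP by simp
  define a where "a = nat (u mod p)"
  have ia: "int a = u mod p" using p0 a_def by simp
  have "\<not> p dvd u"
  proof
    assume "p dvd u"
    moreover have "nat p * nat p > 0" using p0 by simp
    ultimately have pu: "p dvd u^(nat p * nat p)" using dvd_trans[OF \<open>p dvd u\<close> dvd_power[of "nat p * nat p" u]] by simp
    have "p dvd 1" using dvd_diff[OF pu h] by simp
    then show False using p not_prime_unit by blast
  qed
  then have "\<not> p dvd int a" using ia by (simp add: dvd_mod_iff)
  then have "\<not> P dvd a" using pP by simp
  then have "[a^(P-1) = 1] (mod P)" using fermat_theorem Pp by blast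
  then have "[int a^(P-1) = 1] (mod p)" unfolding pP by (metis cong_int_iff of_nat_1 of_nat_power)
  moreover have "[int a = u] (mod p)" using ia by (simp add: cong_def)
  ultimately have c1: "[u^(P-1) = 1] (mod p)" by (metis cong_pow cong_sym cong_trans)
  have P1: "P \<ge> 1" using Pp prime_ge_1_nat by blast
  have "P * P = (P - 1) * (P + 1) + 1" using P1 by (cases P) (simp_all add: algebra_simps)
  then have "u^(P * P) = (u^(P-1))^(P+1) * u" by (simp add: power_mult power_add)
  moreover have "[(u^(P-1))^(P+1) * u = 1^(P+1) * u] (mod p)" using c1 by (intro cong_mult cong_pow) auto
  ultimately have "[u^(P*P) = u] (mod p)" by simp
  moreover have "[u^(P*P) = 1] (mod p)" using h P_def by (simp add: cong_iff_dvd_diff dvd_diff_commute)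
  ultimately have "[u = 1] (mod p)" by (metis cong_sym cong_trans)
  then show ?thesis by (simp add: cong_iff_dvd_diff)
qed



lemma NT7: assumes p: "Factorial_Ring.prime (p::int)" "odd p" and u: "p dvd (u - 1)" and n: "p dvd int n"
  shows "p^2 dvd (geo u n - int n)"
proof -
  obtain t where t: "u = 1 + t*p" using u by (metis dvd_def mult.commute diff_add_cancel add.commute)
  obtain k where k: "int n = p * k" using n by (elim dvdE)
  have e: "t * p * int n * (int n - 1) = p^2 * (t * k * (int n - 1))" unfolding k by (simp add: power2_eq_square algebra_simps)
  have "p^2 dvd (2 * geo (1 + t*p) n - 2 * int n - t * p * int n * (int n - 1)) + t * p * int n * (int n - 1)"
    using NT2[of p t n] unfolding e by (intro dvd_add) auto
  then have "p^2 dvd 2 * (geo u n - int n)" by (simp add: t algebra_simps)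
  then show ?thesis using odd_prime_sq_dvd2 p by blast
qed

lemma coprime_sq: assumes "Factorial_Ring.prime (p::int)" "\<not> p dvd c" shows "coprime (p^2) c"
proof -
  have "coprime p c" using assms prime_imp_coprime by blast
  then show ?thesis by simp
qed

locale hctx =
  fixes p :: int
  assumes prime: "Factorial_Ring.prime p" and odd: "odd p"
begin

abbreviation "m \<equiv> p^2"
abbreviation "N \<equiv> dihedral (p^2)"
abbreviation "Hol \<equiv> holomorph (dihedral (p^2))"

lemma p3: "p \<ge> 3"
proof -
  have "p > 1" using prime prime_gt_1_int by blast
  then have "p \<ge> 2" by simp
  moreover have "p \<noteq> 2" using odd by auto
  ultimately show ?thesis by simp
qed

lemma m2: "m > 2"
proof -
  have "p * p \<ge> 3 * 3" using p3 by (intro mult_mono) auto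
  then show ?thesis by (simp add: power2_eq_square)
qed

lemma m0: "m > 0" using p3 by simp

lemma grpN: "group N" using m0 by (rule group_dih)
lemma grpH: "group Hol" by (rule group_hol[OF grpN])


lemma pow_rot: "((c,False), aff m u b) \<in> carrier Hol \<Longrightarrow> ((c,False), aff m u b) [^]\<^bsub>Hol\<^esub> (n::nat)
         = (((c * geo u n) mod m, False), aff m (u^n) (b * geo u n))"
  using hol_pow_rot[OF m0] by blast

lemma semiD: assumes "semiregular (dihedral (p^2)) Hs" "h \<in> Hs" "x \<in> carrier (dihedral (p^2))" "hol_act (dihedral (p^2)) h x = x"
  shows "h = one Hol"
  using assms unfolding semiregular_def by blast

lemma gen_pow: assumes "g \<in> carrier Hol" "group.ord Hol g \<noteq> 0"
  shows "generate Hol {g} = {g [^]\<^bsub>Hol\<^esub> k | k. k \<in> (UNIV :: nat set)}"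
  using group.generate_pow_nat[OF grpH assms] .

lemma pow_in_gen: assumes "g \<in> carrier Hol" "group.ord Hol g \<noteq> 0"
  shows "g [^]\<^bsub>Hol\<^esub> (k::nat) \<in> generate Hol {g}"
  using gen_pow[OF assms] by blast

lemma nat_m: "nat m = nat p * nat p"
  using p3 by (simp add: power2_eq_square nat_mult_distrib)

lemma classify:
  assumes g: "g \<in> carrier Hol" and ord: "group.ord Hol g = nat m" and semi: "semiregular N (generate Hol {g})"
  shows "\<exists>c u b. g = ((c,False), aff m u b) \<and> 0 \<le> c \<and> c < m \<and> p dvd (u - 1)
          \<and> \<not> p dvd c \<and> \<not> p dvd (c + b) \<and> aff m u b \<in> auto N"
proof -
  interpret H: group Hol by (rule grpH)
  obtain x f where gx: "g = (x,f)" by fastforce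
  have f: "f \<in> auto N" and x: "x \<in> carrier N" using g gx by (auto simp: hol_carrier)
  define u where "u = fst (f (1,False))"
  define b where "b = fst (f (0,True))"
  have fa: "f = aff m u b" unfolding u_def b_def using auto_is_aff[OF m2 f] .
  obtain c e where xc: "x = (c,e)" by fastforce
  have cr: "0 \<le> c" "c < m" using x xc by (auto simp: dih_carrier)
  have ordnz: "group.ord Hol g \<noteq> 0" using ord p3 by simp
  have pow1: "g [^]\<^bsub>Hol\<^esub> nat m = \<one>\<^bsub>Hol\<^esub>" using H.pow_ord_eq_1[OF g] ord by simp
  have ne: "\<not> e"
  proof
    assume e
    have "snd (fst (((c,True), f) [^]\<^bsub>Hol\<^esub> (nat m))) = odd (nat m)"
      using hol_pow_refl[OF m2, of c f "nat m"] g gx xc \<open>e\<close> by simp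
    moreover have "odd (nat m)" using odd by (simp add: even_nat_iff)
    ultimately show False using pow1 gx xc \<open>e\<close> by (simp add: hol_one dih_one)
  qed
  have gform: "g = ((c,False), aff m u b)" using gx xc ne fa by simp
  have fauto: "aff m u b \<in> auto N" using f fa by simp
  have gc: "((c,False), aff m u b) \<in> carrier Hol" using g gform by simp
  have "aff m (u^nat m) (b * geo u (nat m)) = \<one>\<^bsub>AutoGroup N\<^esub>"
    using pow1 pow_rot[OF gc, of "nat m"] gform by (simp add: hol_one)
  then have "aff m (u^nat m) (b * geo u (nat m)) = aff m 1 0" using aff_one[OF m0] by simp
  then have "[u^nat m = 1] (mod m)" using aff_eqD m2 by (meson less_trans one_less_numeral_iff semiring_norm(76))
  then have "m dvd u^nat m - 1" by (simp add: cong_iff_dvd_diff)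
  then have "p dvd u^(nat p * nat p) - 1" using nat_m by (metis sq_dvd_imp_dvd)
  then have pu: "p dvd (u - 1)" using fermat_int[OF prime] by blast
  have pp: "p dvd int (nat p)" using p3 by simp
  have gp_ne: "g [^]\<^bsub>Hol\<^esub> nat p \<noteq> \<one>\<^bsub>Hol\<^esub>"
  proof
    assume "g [^]\<^bsub>Hol\<^esub> nat p = \<one>\<^bsub>Hol\<^esub>"
    then have "nat m dvd nat p" using H.pow_eq_id[OF g] ord by simp
    then have d: "nat p * nat p dvd nat p" using nat_m by simp
    have P3: "nat p \<ge> 3" using p3 by simp
    have "nat p * nat p \<le> nat p" using d by (rule dvd_imp_le) (use P3 in simp)
    moreover have "3 * nat p \<le> nat p * nat p" using P3 by (intro mult_le_mono1)
    ultimately show False using P3 by simp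
  qed
  have geop: "m dvd geo u (nat p) - int (nat p)" using NT7[OF prime odd pu pp] .
  have up: "m dvd u^(nat p) - 1" using NT5[OF pu pp] .
  have c1: "(c * geo u (nat p)) mod m = (c * p) mod m"
  proof -
    have "m dvd c * (geo u (nat p) - int (nat p))" using geop by simp
    then show ?thesis using p3 by (simp add: mod_eq_dvd_iff algebra_simps)
  qed
  have c2: "aff m (u^nat p) (b * geo u (nat p)) = aff m 1 (b * p)"
  proof (rule aff_cong)
    show "[u ^ nat p = 1] (mod m)" using up by (simp add: cong_iff_dvd_diff)
    have "m dvd b * (geo u (nat p) - int (nat p))" using geop by simp
    then show "[b * geo u (nat p) = b * p] (mod m)" using p3 by (simp add: cong_iff_dvd_diff algebra_simps)
  qed
  define d where "d = (c * p) mod m"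
  have dr: "0 \<le> d" "d < m" using m0 by (auto simp: d_def)
  have gp: "g [^]\<^bsub>Hol\<^esub> nat p = ((d,False), aff m 1 (b * p))"
    using pow_rot[OF gc, of "nat p"] gform c1 c2 by (simp add: d_def)
  have gpin: "g [^]\<^bsub>Hol\<^esub> nat p \<in> generate Hol {g}" using pow_in_gen[OF g ordnz] .
  have "\<not> p dvd c"
  proof
    assume "p dvd c"
    then have "m dvd c * p" by (auto simp: power2_eq_square)
    then have d0: "d = 0" by (simp add: d_def)
    have "hol_act N (g [^]\<^bsub>Hol\<^esub> nat p) (0,False) = (0,False)"
      using hol_act_rot(1)[OF dr, of 0 1 "b*p"] m0 unfolding gp by (simp add: d0)
    moreover have "(0::int,False) \<in> carrier N" "(0::int,True) \<in> carrier N" using m0 by (auto simp: dih_carrier)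
    ultimately have "g [^]\<^bsub>Hol\<^esub> nat p = \<one>\<^bsub>Hol\<^esub>" using semiD[OF semi gpin] by blast
    then show False using gp_ne by simp
  qed
  moreover have "\<not> p dvd (c + b)"
  proof
    assume "p dvd (c + b)"
    then have "m dvd (c + b) * p" by (auto simp: power2_eq_square)
    then have "(d + b * p) mod m = 0" unfolding d_def by (simp add: mod_simps algebra_simps)
    then have "hol_act N (g [^]\<^bsub>Hol\<^esub> nat p) (0,True) = (0,True)"
      using hol_act_rot(2)[OF dr, of 0 1 "b*p"] m0 unfolding gp by simp
    moreover have "(0::int,False) \<in> carrier N" "(0::int,True) \<in> carrier N" using m0 by (auto simp: dih_carrier)
    ultimately have "g [^]\<^bsub>Hol\<^esub> nat p = \<one>\<^bsub>Hol\<^esub>" using semiD[OF semi gpin] by blast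
    then show False using gp_ne by simp
  qed
  ultimately show ?thesis using gform cr pu fauto by blast
qed

end



context hctx
begin

lemma kl: assumes pu: "p dvd (u - 1)" and pk: "\<not> p dvd k" and h: "m dvd (k * geo u n + (u^n - 1) * a)"
  shows "m dvd int n"
proof -
  have p1: "p dvd (u^n - 1)" using NT6[OF pu] .
  have "p dvd (k * geo u n + (u^n - 1) * a)" using h by (rule sq_dvd_imp_dvd)
  moreover have "p dvd (u^n - 1) * a" using p1 by simp
  ultimately have "p dvd k * geo u n" by (simp add: dvd_add_left_iff)
  then have pg: "p dvd geo u n" using pk prime prime_dvd_mult_iff by blast
  have "p dvd geo u n - (geo u n - int n)" using dvd_diff[OF pg NT4[OF prime odd pu]] .
  then have pn: "p dvd int n" by simp
  have "m dvd (u^n - 1)" using NT5[OF pu pn] .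
  then have "m dvd (u^n - 1) * a" by simp
  then have "m dvd k * geo u n" using h by (simp add: dvd_add_left_iff)
  then have "m dvd geo u n" using coprime_dvd_mult_right_iff[OF coprime_sq[OF prime pk]] by blast
  then have "m dvd (geo u n - geo u 0)" by simp
  then have "m dvd (int n - int 0)" using NT3[OF prime odd pu] by blast
  then show ?thesis by simp
qed

lemma ord_semi:
  assumes cr: "0 \<le> c" "c < m" and fa: "aff m u b \<in> auto N" and pu: "p dvd (u - 1)"
    and pc: "\<not> p dvd c" and pcb: "\<not> p dvd (c + b)"
  shows "group.ord Hol ((c,False), aff m u b) = nat m"
    and "semiregular N (generate Hol {((c,False), aff m u b)})"
proof -
  interpret H: group Hol by (rule grpH)
  define g where "g = ((c,False), aff m u b)"
  have gc: "g \<in> carrier Hol" using cr fa by (simp add: g_def hol_carrier dih_carrier)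
  have pw: "g [^]\<^bsub>Hol\<^esub> n = (((c * geo u n) mod m, False), aff m (u^n) (b * geo u n))" for n
    using pow_rot[of c u b n] gc by (simp add: g_def)
  have one_iff: "g [^]\<^bsub>Hol\<^esub> n = \<one>\<^bsub>Hol\<^esub> \<longleftrightarrow> m dvd int n" for n
  proof
    assume "g [^]\<^bsub>Hol\<^esub> n = \<one>\<^bsub>Hol\<^esub>"
    then have "(c * geo u n) mod m = 0" using pw[of n] by (simp add: hol_one dih_one)
    then have "m dvd (c * geo u n + (u^n - 1) * 0)" by (simp add: mod_eq_0_iff_dvd)
    then show "m dvd int n" using kl[OF pu pc] by blast
  next
    assume mn: "m dvd int n"
    then have "m dvd (geo u n - geo u 0)" using NT3[OF prime odd pu, of n 0] by simp
    then have mg: "m dvd geo u n" by simp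
    have "p dvd int n" using mn by (rule sq_dvd_imp_dvd)
    then have mu: "m dvd (u^n - 1)" using NT5[OF pu] by blast
    have "aff m (u^n) (b * geo u n) = aff m 1 0"
      by (rule aff_cong) (use mu mg in \<open>auto simp: cong_iff_dvd_diff\<close>)
    then show "g [^]\<^bsub>Hol\<^esub> n = \<one>\<^bsub>Hol\<^esub>" using pw[of n] mg aff_one[OF m0]
      by (simp add: hol_one dih_one)
  qed
  have ordg: "group.ord Hol g = nat m"
  proof -
    have "\<forall>n. g [^]\<^bsub>Hol\<^esub> n = \<one>\<^bsub>Hol\<^esub> \<longleftrightarrow> nat m dvd n"
    proof
      fix n
      have "m dvd int n \<longleftrightarrow> nat m dvd n" using m0 by (metis int_dvd_int_iff zero_less_imp_eq_int nat_int)
      then show "g [^]\<^bsub>Hol\<^esub> n = \<one>\<^bsub>Hol\<^esub> \<longleftrightarrow> nat m dvd n" using one_iff by simp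
    qed
    then show ?thesis using H.ord_unique[OF gc] by blast
  qed
  then show "group.ord Hol ((c,False), aff m u b) = nat m" by (simp add: g_def)
  have ordnz: "group.ord Hol g \<noteq> 0" using ordg p3 by simp
  show "semiregular N (generate Hol {((c,False), aff m u b)})"
    unfolding semiregular_def g_def[symmetric]
  proof (intro ballI impI)
    fix y h assume y: "y \<in> carrier N" and h: "h \<in> generate Hol {g}" and fx: "hol_act N h y = y"
    obtain n where hn: "h = g [^]\<^bsub>Hol\<^esub> (n::nat)" using h gen_pow[OF gc ordnz] by blast
    define d where "d = (c * geo u n) mod m"
    have dr: "0 \<le> d" "d < m" using m0 by (auto simp: d_def)
    have md: "m dvd (c * geo u n - d)" unfolding d_def by (rule dvd_minus_mod)
    have hform: "h = ((d,False), aff m (u^n) (b * geo u n))" using hn pw[of n] by (simp add: d_def)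
    obtain a e where ya: "y = (a,e)" by fastforce
    have ar: "0 \<le> a" "a < m" using y ya by (auto simp: dih_carrier)
    have "m dvd int n"
    proof (cases e)
      case False
      then have "((d + u^n * a) mod m, False) = (a,False)" using fx hol_act_rot(1)[OF dr ar] hform ya by simp
      then have "(d + u^n * a) mod m = a mod m" using ar by simp
      then have "m dvd (d + u^n * a - a)" by (simp add: mod_eq_dvd_iff)
      then have "m dvd (d + u^n * a - a) + (c * geo u n - d)" using md by (rule dvd_add)
      then have "m dvd (c * geo u n + (u^n - 1) * a)" by (simp add: algebra_simps)
      then show ?thesis using kl[OF pu pc] by blast
    next
      case True
      then have "((d + u^n * a + b * geo u n) mod m, True) = (a,True)" using fx hol_act_rot(2)[OF dr ar] hform ya by simp
      then have "(d + u^n * a + b * geo u n) mod m = a mod m" using ar by simp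
      then have "m dvd (d + u^n * a + b * geo u n - a)" by (simp add: mod_eq_dvd_iff)
      then have "m dvd (d + u^n * a + b * geo u n - a) + (c * geo u n - d)" using md by (rule dvd_add)
      then have "m dvd ((c + b) * geo u n + (u^n - 1) * a)" by (simp add: algebra_simps)
      then show ?thesis using kl[OF pu pcb] by blast
    qed
    then show "h = \<one>\<^bsub>Hol\<^esub>" using one_iff hn by simp
  qed
qed

lemma exists_gen: assumes pc: "\<not> p dvd c" and pu: "p dvd (u - 1)"
  shows "\<exists>n. (c * geo u n) mod m = 1"
proof -
  define phi where "phi = (\<lambda>n. (c * geo u n) mod m)"
  define A where "A = {..<nat m}"
  have inj: "inj_on phi A"
  proof (rule inj_onI)
    fix n n' assume n: "n \<in> A" and n': "n' \<in> A" and eq: "phi n = phi n'"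
    then have "m dvd (c * geo u n - c * geo u n')" by (simp add: phi_def mod_eq_dvd_iff)
    then have "m dvd c * (geo u n - geo u n')" by (simp add: algebra_simps)
    then have "m dvd (geo u n - geo u n')" using coprime_dvd_mult_right_iff[OF coprime_sq[OF prime pc]] by blast
    then have "m dvd (int n - int n')" using NT3[OF prime odd pu] by blast
    then have "int n mod m = int n' mod m" by (simp add: mod_eq_dvd_iff)
    moreover have "int n < m" "int n' < m" using n n' by (auto simp: A_def)
    ultimately have "int n = int n'" by (simp add: mod_pos_pos_trivial)
    then show "n = n'" by simp
  qed
  have sub: "phi ` A \<subseteq> {0..<m}" using m0 by (auto simp: phi_def)
  have "card (phi ` A) = card {0..<m}" using card_image[OF inj] m0 by (simp add: A_def)
  then have "phi ` A = {0..<m}" using card_subset_eq[OF _ sub] by simp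
  moreover have "(1::int) \<in> {0..<m}" using m2 by simp
  ultimately have "1 \<in> phi ` A" by simp
  then show ?thesis
  proof (rule imageE)
    fix n assume "1 = phi n"
    then show ?thesis unfolding phi_def by (metis)
  qed
qed

end



context hctx
begin

lemma dih_r_eq: "dih_r m = (1,False)" using m2 by (simp add: dih_r_def)
lemma dih_s_eq: "dih_s = (0,True)" by (simp add: dih_s_def)

lemma r_pow: "(1::int,False) [^]\<^bsub>N\<^esub> (k::nat) = (int k mod m, False)"
proof (induction k)
  case 0 then show ?case by (simp add: dih_one)
next
  case (Suc k)
  have "(1::int,False) [^]\<^bsub>N\<^esub> Suc k = (int k mod m, False) \<otimes>\<^bsub>N\<^esub> (1,False)" using Suc by simp
  also have "\<dots> = (int (Suc k) mod m, False)" by (simp add: dih_mult mod_simps add.commute)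
  finally show ?case .
qed

lemma p1_lt: "p + 1 < m"
proof -
  have "p * 3 \<le> p * p" using p3 by (intro mult_left_mono) auto
  then show ?thesis using p3 unfolding power2_eq_square by linarith
qed

lemma cop1: "coprime (p+1) m"
proof -
  have "\<not> p dvd (p + 1)"
  proof
    assume "p dvd p + 1"
    then have "p dvd 1" by (simp add: dvd_add_right_iff)
    then show False using prime not_prime_unit by blast
  qed
  then have "coprime m (p+1)" by (rule coprime_sq[OF prime])
  then show ?thesis by (simp add: coprime_commute)
qed

lemma cop1k: "coprime ((p+1)^k) m" using cop1 by simp

lemma phi1_eq: "phi1 p = aff m 1 1"
  unfolding phi1_def
proof (rule the_equality)
  show "aff m 1 1 \<in> auto N \<and> aff m 1 1 (dih_r m) = dih_r m \<and> aff m 1 1 dih_s = dih_r m \<otimes>\<^bsub>N\<^esub> dih_s"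
    using aff_in_auto[of 1 m 1] m2 p3 by (simp add: dih_r_eq dih_s_eq aff_apply dih_mult)
next
  fix f assume f: "f \<in> auto N \<and> f (dih_r m) = dih_r m \<and> f dih_s = dih_r m \<otimes>\<^bsub>N\<^esub> dih_s"
  then have "f (1,False) = (1,False)" "f (0,True) = (1,True)" using m2 by (auto simp: dih_r_eq dih_s_eq dih_mult)
  then show "f = aff m 1 1" using auto_is_aff[OF m2, of f] f by simp
qed

lemma phi2_eq: "phi2 p = aff m (p+1) 0"
  unfolding phi2_def
proof (rule the_equality)
  have e: "int (nat p + 1) = p + 1" using p3 by simp
  have r: "dih_r m [^]\<^bsub>N\<^esub> (nat p + 1) = (p + 1, False)"
    using r_pow[of "nat p + 1"] p1_lt p3 unfolding dih_r_eq e by simp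
  show "aff m (p+1) 0 \<in> auto N \<and> aff m (p+1) 0 (dih_r m) = dih_r m [^]\<^bsub>N\<^esub> (nat p + 1) \<and> aff m (p+1) 0 dih_s = dih_s"
    using aff_in_auto[OF cop1 m0, of 0] m2 p1_lt p3 unfolding r by (simp add: dih_r_eq dih_s_eq aff_apply)
next
  fix f assume f: "f \<in> auto N \<and> f (dih_r m) = dih_r m [^]\<^bsub>N\<^esub> (nat p + 1) \<and> f dih_s = dih_s"
  have e: "int (nat p + 1) = p + 1" using p3 by simp
  have r: "dih_r m [^]\<^bsub>N\<^esub> (nat p + 1) = (p + 1, False)"
    using r_pow[of "nat p + 1"] p1_lt p3 unfolding dih_r_eq e by simp
  have "f (1,False) = (p+1,False)" "f (0,True) = (0,True)" using f r by (auto simp: dih_r_eq dih_s_eq)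
  then show "f = aff m (p+1) 0" using auto_is_aff[OF m2, of f] f by simp
qed

lemma geo1: "geo 1 j = int j" by (simp add: geo_def)

lemma phi_prod: "phi1 p [^]\<^bsub>AutoGroup N\<^esub> (j::nat) \<otimes>\<^bsub>AutoGroup N\<^esub> phi2 p [^]\<^bsub>AutoGroup N\<^esub> (k::nat)
   = aff m ((p+1)^k) (int j)"
proof -
  have a1: "aff m 1 1 \<in> auto N" using aff_in_auto[of 1 m 1] m0 by simp
  have a2: "aff m (p+1) 0 \<in> auto N" using aff_in_auto[OF cop1 m0] .
  have b1: "aff m 1 (int j) \<in> auto N" using aff_in_auto[of 1 m "int j"] m0 by simp
  have b2: "aff m ((p+1)^k) 0 \<in> auto N" using aff_in_auto[OF cop1k m0] .
  have "phi1 p [^]\<^bsub>AutoGroup N\<^esub> j = aff m 1 (int j)" unfolding phi1_eq aff_pow[OF m0 a1] by (simp add: geo1)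
  moreover have "phi2 p [^]\<^bsub>AutoGroup N\<^esub> k = aff m ((p+1)^k) 0" unfolding phi2_eq aff_pow[OF m0 a2] by simp
  ultimately show ?thesis using aff_comp[OF m0 b1 b2] by simp
qed

definition Gel :: "nat \<Rightarrow> nat \<Rightarrow> (int \<times> bool) \<times> (int \<times> bool \<Rightarrow> int \<times> bool)" where
  "Gel j k = ((1,False), aff m ((p+1)^k) (int j))"

definition Iset :: "(nat \<times> nat) set" where
  "Iset = {(j,k). j < nat m \<and> (int j + 1) mod p \<noteq> 0 \<and> k < nat p}"

lemma Gel_good:
  assumes "(j,k) \<in> Iset"
  shows "Gel j k \<in> carrier Hol" "group.ord Hol (Gel j k) = nat m" "semiregular N (generate Hol {Gel j k})"
proof -
  have fa: "aff m ((p+1)^k) (int j) \<in> auto N" using aff_in_auto[OF cop1k m0] .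
  have pu: "p dvd ((p+1)^k - 1)" using NT6[of p "p+1" k] by simp
  have pc: "\<not> p dvd 1" using prime not_prime_unit by blast
  have pcb: "\<not> p dvd (1 + int j)" using assms by (simp add: Iset_def dvd_eq_mod_eq_0 add.commute)
  show "Gel j k \<in> carrier Hol" using fa m2 by (simp add: Gel_def hol_carrier dih_carrier)
  show "group.ord Hol (Gel j k) = nat m" "semiregular N (generate Hol {Gel j k})"
    using ord_semi[of 1 "(p+1)^k" "int j", OF _ _ fa pu pc pcb] m2 by (simp_all add: Gel_def)
qed

end



context hctx
begin

lemma S_to_I:
  assumes g: "g \<in> carrier Hol" and cg: "card (generate Hol {g}) = nat m"
    and semi: "semiregular N (generate Hol {g})"
  shows "\<exists>j k. (j,k) \<in> Iset \<and> generate Hol {g} = generate Hol {Gel j k}"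
proof -
  interpret H: group Hol by (rule grpH)
  have ord: "group.ord Hol g = nat m" using H.generate_pow_card[OF g] cg by simp
  have ordnz: "group.ord Hol g \<noteq> 0" using ord p3 by simp
  obtain c u b where gf: "g = ((c,False), aff m u b)" and cr: "0 \<le> c" "c < m" and pu: "p dvd (u - 1)"
    and pc: "\<not> p dvd c" and pcb: "\<not> p dvd (c + b)" and fa: "aff m u b \<in> auto N"
    using classify[OF g ord semi] by blast
  obtain n where cn: "(c * geo u n) mod m = 1" using exists_gen[OF pc pu] by blast
  have gc: "((c,False), aff m u b) \<in> carrier Hol" using g gf by simp
  define u' where "u' = u^n"
  define b' where "b' = b * geo u n"
  have g'f: "g [^]\<^bsub>Hol\<^esub> n = ((1,False), aff m u' b')"
    using pow_rot[OF gc, of n] gf cn by (simp add: u'_def b'_def)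
  have g'c: "g [^]\<^bsub>Hol\<^esub> n \<in> carrier Hol" using H.nat_pow_closed[OF g] .
  then have fa': "aff m u' b' \<in> auto N" using g'f by (simp add: hol_carrier)
  have pu': "p dvd (u' - 1)" unfolding u'_def using NT6[OF pu] .
  have pc1: "\<not> p dvd 1" using prime not_prime_unit by blast
  have m1: "m dvd c * geo u n - 1" using cn by (metis dvd_minus_mod)
  then have p1: "p dvd c * geo u n - 1" by (rule sq_dvd_imp_dvd)
  have pcb': "\<not> p dvd (1 + b')"
  proof
    assume h: "p dvd (1 + b')"
    have "p dvd (1 + b') + (c * geo u n - 1)" using h p1 by (rule dvd_add)
    then have "p dvd (c + b) * geo u n" by (simp add: b'_def algebra_simps)
    then have "p dvd geo u n" using pcb prime prime_dvd_mult_iff by blast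
    then have "p dvd c * geo u n" by simp
    then have "p dvd c * geo u n - (c * geo u n - 1)" using p1 by (rule dvd_diff)
    then show False using pc1 by simp
  qed
  have os: "group.ord Hol ((1,False), aff m u' b') = nat m"
    using ord_semi(1)[of 1 u' b', OF _ _ fa' pu' pc1 pcb'] m2 by simp
  have sub: "generate Hol {g [^]\<^bsub>Hol\<^esub> n} \<subseteq> generate Hol {g}"
    by (rule H.generate_subgroup_incl) (use pow_in_gen[OF g ordnz] H.generate_is_subgroup g in auto)
  have c1: "card (generate Hol {g [^]\<^bsub>Hol\<^esub> n}) = nat m"
    using H.generate_pow_card[OF g'c] os g'f by simp
  have fin: "finite (generate Hol {g})" using cg p3 by (intro card_ge_0_finite) simp
  have geq: "generate Hol {g [^]\<^bsub>Hol\<^esub> n} = generate Hol {g}"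
    using card_subset_eq[OF fin sub] c1 cg by simp
  define w where "w = (u' - 1) mod m"
  have pw: "p dvd w" unfolding w_def using pu' by (simp add: dvd_mod_iff)
  then obtain k0 where k0: "w = p * k0" by (elim dvdE)
  have wr: "0 \<le> w" "w < p * p" using m0 by (auto simp: w_def power2_eq_square)
  have k0r: "0 \<le> k0" "k0 < p" using wr p3 k0
    by (auto simp: zero_le_mult_iff mult_less_cancel_left)
  define k where "k = nat k0"
  have kk: "int k = k0" using k0r by (simp add: k_def)
  define j where "j = nat (b' mod m)"
  have jj: "int j = b' mod m" using m0 by (simp add: j_def)
  have "int j < m" using jj m0 by simp
  then have jr: "j < nat m" by linarith
  have kr: "k < nat p" using k0r by (simp add: k_def)
  have jc: "(int j + 1) mod p \<noteq> 0"
  proof -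
    have "(int j + 1) mod p = (b' mod m mod p + 1) mod p" unfolding jj by (simp add: mod_simps)
    also have "b' mod m mod p = b' mod p" by (rule mod_mod_cancel) (simp add: power2_eq_square)
    also have "(b' mod p + 1) mod p = (1 + b') mod p" by (simp add: mod_simps add.commute)
    finally show ?thesis using pcb' by (simp add: dvd_eq_mod_eq_0)
  qed
  have ucong: "[u' = (p+1)^k] (mod m)"
  proof -
    have "m dvd ((1 + 1*p)^k - 1 - int k * 1 * p)" by (rule NT1)
    then have h1: "m dvd ((p+1)^k - 1 - w)" using kk k0 by (simp add: add.commute mult.commute)
    have h2: "m dvd (u' - 1) - w" unfolding w_def by (rule dvd_minus_mod)
    have "m dvd ((u' - 1) - w) - ((p+1)^k - 1 - w)" using h2 h1 by (rule dvd_diff)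
    then show ?thesis by (simp add: cong_iff_dvd_diff)
  qed
  have bcong: "[b' = int j] (mod m)" using jj by (simp add: cong_def)
  have "g [^]\<^bsub>Hol\<^esub> n = Gel j k" using g'f aff_cong[OF ucong bcong] by (simp add: Gel_def)
  then have "generate Hol {g} = generate Hol {Gel j k}" using geq by simp
  moreover have "(j,k) \<in> Iset" using jr jc kr by (simp add: Iset_def)
  ultimately show ?thesis by blast
qed

end



context hctx
begin

lemma small_dvd_eq: assumes "(d::int) > 0" "0 \<le> x" "x < d" "0 \<le> y" "y < d" "d dvd x - y" shows "x = y"
proof -
  have "x mod d = y mod d" using assms(6) by (simp add: mod_eq_dvd_iff)
  then show ?thesis using assms by (simp add: mod_pos_pos_trivial)
qed

lemma Gel_inj: "inj_on (\<lambda>(j,k). generate Hol {Gel j k}) Iset"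
proof (rule inj_onI)
  interpret H: group Hol by (rule grpH)
  fix x y assume x: "x \<in> Iset" and y: "y \<in> Iset" and eq: "(\<lambda>(j,k). generate Hol {Gel j k}) x = (\<lambda>(j,k). generate Hol {Gel j k}) y"
  obtain j k where xj: "x = (j,k)" by fastforce
  obtain j' k' where yj: "y = (j',k')" by fastforce
  have x': "(j,k) \<in> Iset" and y': "(j',k') \<in> Iset" using x y xj yj by auto
  have eq': "generate Hol {Gel j k} = generate Hol {Gel j' k'}" using eq xj yj by simp
  note gx = Gel_good[OF x'] and gy = Gel_good[OF y']
  have ordnz: "group.ord Hol (Gel j k) \<noteq> 0" using gx(2) p3 by simp
  have "Gel j' k' \<in> generate Hol {Gel j k}" using eq' generate.incl[of "Gel j' k'" "{Gel j' k'}" Hol] by simp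
  then obtain n where n: "Gel j' k' = Gel j k [^]\<^bsub>Hol\<^esub> (n::nat)" using gen_pow[OF gx(1) ordnz] by blast
  define u where "u = (p+1)^k"
  have gcar: "((1,False), aff m u (int j)) \<in> carrier Hol" using gx(1) by (simp add: Gel_def u_def)
  have "Gel j k [^]\<^bsub>Hol\<^esub> n = (((1 * geo u n) mod m, False), aff m (u^n) (int j * geo u n))"
    using pow_rot[OF gcar, of n] by (simp add: Gel_def u_def)
  then have "geo u n mod m = 1" using n by (simp add: Gel_def)
  then have "m dvd geo u n - 1" by (metis dvd_minus_mod)
  then have "m dvd geo u n - geo u 1" by (simp add: geo_def)
  moreover have pu: "p dvd (u - 1)" using NT6[of p "p+1" k] by (simp add: u_def)
  ultimately have "m dvd int n - int 1" using NT3[OF prime odd pu] by blast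
  then have "m dvd int n - 1" by simp
  then obtain q where q: "int n - 1 = m * q" by (elim dvdE)
  have "n \<ge> 1"
  proof (rule ccontr)
    assume "\<not> n \<ge> 1"
    then have "m * q = -1" using q by simp
    then have "m dvd 1" by (metis dvd_minus_iff dvd_triv_left)
    then show False using m2 by (simp add: zdvd_imp_le)
  qed
  then have "0 \<le> m * q" using q by simp
  then have "q \<ge> 0" using m0 by (simp add: zero_le_mult_iff)
  define Q where "Q = nat q"
  have "int n = int (1 + nat m * Q)" using q \<open>q \<ge> 0\<close> m0 by (simp add: Q_def)
  then have nQ: "n = 1 + nat m * Q" by (simp only: of_nat_eq_iff)
  have "Gel j k [^]\<^bsub>Hol\<^esub> n = Gel j k [^]\<^bsub>Hol\<^esub> (1::nat) \<otimes>\<^bsub>Hol\<^esub> Gel j k [^]\<^bsub>Hol\<^esub> (nat m * Q)"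
    unfolding nQ by (rule H.nat_pow_mult[symmetric, OF gx(1)])
  also have "Gel j k [^]\<^bsub>Hol\<^esub> (nat m * Q) = (Gel j k [^]\<^bsub>Hol\<^esub> nat m) [^]\<^bsub>Hol\<^esub> Q"
    by (rule H.nat_pow_pow[symmetric, OF gx(1)])
  also have "Gel j k [^]\<^bsub>Hol\<^esub> nat m = \<one>\<^bsub>Hol\<^esub>" using H.pow_ord_eq_1[OF gx(1)] gx(2) by simp
  also have "Gel j k [^]\<^bsub>Hol\<^esub> (1::nat) \<otimes>\<^bsub>Hol\<^esub> \<one>\<^bsub>Hol\<^esub> [^]\<^bsub>Hol\<^esub> Q = Gel j k" using gx(1) by simp
  finally have GG: "Gel j' k' = Gel j k" using n by simp
  then have aeq: "aff m ((p+1)^k') (int j') = aff m ((p+1)^k) (int j)" by (simp add: Gel_def)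
  have m1: "m > 1" using m2 by simp
  have "[int j' = int j] (mod m)" using aff_eqD(2)[OF aeq m1] .
  moreover have "int j < m" "int j' < m" using x' y' by (auto simp: Iset_def)
  ultimately have jeq: "j' = j" using small_dvd_eq[OF m0, of "int j'" "int j"] by (simp add: cong_iff_dvd_diff)
  have c: "[(p+1)^k' = (p+1)^k] (mod m)" using aff_eqD(1)[OF aeq m1] .
  have a1: "m dvd ((p+1)^k' - 1 - int k' * p)" using NT1[of p 1 k'] by (simp add: add.commute)
  have a2: "m dvd ((p+1)^k - 1 - int k * p)" using NT1[of p 1 k] by (simp add: add.commute)
  have d0: "m dvd ((p+1)^k' - (p+1)^k)" using c by (simp add: cong_iff_dvd_diff)
  have "m dvd ((p+1)^k' - (p+1)^k) - ((p+1)^k' - 1 - int k' * p) + ((p+1)^k - 1 - int k * p)"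
    by (rule dvd_add[OF dvd_diff[OF d0 a1] a2])
  then have "p * p dvd (int k' - int k) * p" by (simp add: power2_eq_square algebra_simps)
  then have "p dvd int k' - int k" using p3 by (metis dvd_mult_cancel_right mult.commute not_numeral_le_zero order_refl dvd_times_right_cancel_iff)
  moreover have "int k < p" "int k' < p" using x' y' by (auto simp: Iset_def)
  ultimately have keq: "k' = k" using small_dvd_eq[of p "int k'" "int k"] p3 by simp
  show "x = y" using xj yj jeq keq by simp
qed

end



context hctx
begin

lemma card_Iset: "card Iset = (nat m - nat p) * nat p"
proof -
  define P where "P = nat p"
  have pP: "p = int P" using p3 by (simp add: P_def)
  have P1: "P \<ge> 3" using p3 by (simp add: P_def)
  have nm: "nat m = P * P" using nat_m by (simp add: P_def)
  have modc: "(int j + 1) mod p = 0 \<longleftrightarrow> P dvd (j + 1)" for j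
  proof -
    have "(int j + 1) mod p = 0 \<longleftrightarrow> p dvd int (j + 1)" by (simp add: dvd_eq_mod_eq_0 add.commute)
    also have "\<dots> \<longleftrightarrow> P dvd (j + 1)" unfolding pP by (rule int_dvd_int_iff)
    finally show ?thesis .
  qed
  define Jset where "Jset = {j. j < P * P \<and> \<not> P dvd (j + 1)}"
  define Kset where "Kset = {j. j < P * P \<and> P dvd (j + 1)}"
  have I_eq: "Iset = Jset \<times> {..<P}" unfolding Iset_def Jset_def using modc nm by (auto simp: P_def)
  have K_eq: "Kset = (\<lambda>i. P * i + (P - 1)) ` {..<P}"
  proof
    show "Kset \<subseteq> (\<lambda>i. P * i + (P - 1)) ` {..<P}"
    proof
      fix j assume "j \<in> Kset"
      then have j: "j < P * P" "P dvd (j + 1)" by (auto simp: Kset_def)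
      then obtain q where q: "j + 1 = P * q" by (elim dvdE)
      then obtain q' where q': "q = Suc q'" by (cases q) auto
      have "j + 1 \<le> P * P" using j(1) by simp
      then have "P * q \<le> P * P" by (simp only: q)
      then have "q \<le> P" using P1 by simp
      then have "q' < P" using q' by simp
      moreover have "j = P * q' + (P - 1)" using q q' P1 by simp
      ultimately show "j \<in> (\<lambda>i. P * i + (P - 1)) ` {..<P}" by blast
    qed
  next
    show "(\<lambda>i. P * i + (P - 1)) ` {..<P} \<subseteq> Kset"
    proof
      fix j assume "j \<in> (\<lambda>i. P * i + (P - 1)) ` {..<P}"
      then obtain i where i: "i < P" and ji: "j = P * i + (P - 1)" by blast
      have j1: "j + 1 = P * (i + 1)" using ji P1 by simp
      have "P * (i + 1) \<le> P * P" using i by (intro mult_le_mono2) simp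
      then have "j < P * P" using j1 by simp
      then show "j \<in> Kset" using j1 by (simp add: Kset_def)
    qed
  qed
  have inj: "inj_on (\<lambda>i. P * i + (P - 1)) {..<P}"
  proof (rule inj_onI)
    fix x y assume "P * x + (P - 1) = P * y + (P - 1)"
    then have "P * x = P * y" by (simp only: add_right_cancel)
    then show "x = y" using P1 by simp
  qed
  have cK: "card Kset = P" using card_image[OF inj] K_eq by simp
  have J_eq: "Jset = {..<P * P} - Kset" by (auto simp: Jset_def Kset_def)
  have cJ: "card Jset = P * P - P" using cK J_eq by (simp add: card_Diff_subset Kset_def subset_eq)
  show ?thesis using I_eq cJ nm by (simp add: card_cartesian_product P_def)
qed

lemma nat_count: "(nat m - nat p) * nat p = nat (p^3 - p^2)"
proof -
  define P where "P = nat p"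
  have pP: "p = int P" using p3 by (simp add: P_def)
  have P1: "P \<ge> 1" using p3 by (simp add: P_def)
  have "P \<le> P * P" using P1 by simp
  then have e: "int ((P * P - P) * P) = p^3 - p^2" unfolding pP by (simp add: of_nat_diff algebra_simps power2_eq_square power3_eq_cube)
  have "nat (p^3 - p^2) = (P * P - P) * P" by (simp only: e[symmetric] nat_int)
  then show ?thesis using nat_m by (simp add: P_def)
qed

end



theorem lemma13:
  fixes p :: int
  assumes "Factorial_Ring.prime p" and "odd p"
  defines "N \<equiv> dihedral (p^2)"
  defines "Hol \<equiv> holomorph N"
  defines "A \<equiv> AutoGroup N"
  defines "S \<equiv> {H. subgroup H Hol \<and> (\<exists>g \<in> carrier Hol. H = generate Hol {g})
                   \<and> card H = nat (p^2) \<and> semiregular N H}"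
  shows "S = {generate Hol {(dih_r (p^2), phi1 p [^]\<^bsub>A\<^esub> j \<otimes>\<^bsub>A\<^esub> phi2 p [^]\<^bsub>A\<^esub> k)} | j k.
                j < nat (p^2) \<and> (int j + 1) mod p \<noteq> 0 \<and> k < nat p}
         \<and> card S = nat (p^3 - p^2)"
proof -
  interpret hctx p using assms(1,2) by unfold_locales
  interpret HG: group "holomorph (dihedral (p^2))" by (rule grpH)
  define gen where "gen = (\<lambda>(j,k). generate (holomorph (dihedral (p^2))) {Gel j k})"
  have rhs: "{generate Hol {(dih_r (p^2), phi1 p [^]\<^bsub>A\<^esub> j \<otimes>\<^bsub>A\<^esub> phi2 p [^]\<^bsub>A\<^esub> k)} | j k.
                j < nat (p^2) \<and> (int j + 1) mod p \<noteq> 0 \<and> k < nat p} = gen ` Iset"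
  proof -
    have e: "(dih_r (p^2), phi1 p [^]\<^bsub>A\<^esub> j \<otimes>\<^bsub>A\<^esub> phi2 p [^]\<^bsub>A\<^esub> k) = Gel j k" for j k :: nat
      unfolding A_def N_def by (simp add: phi_prod dih_r_eq Gel_def)
    show ?thesis unfolding e by (auto simp: gen_def Iset_def Hol_def N_def)
  qed
  have Seq: "S = gen ` Iset"
  proof
    show "S \<subseteq> gen ` Iset"
    proof
      fix H assume "H \<in> S"
      then obtain g where g: "g \<in> carrier (holomorph (dihedral (p^2)))" and Hg: "H = generate (holomorph (dihedral (p^2))) {g}"
        and c: "card H = nat (p^2)" and sr: "semiregular (dihedral (p^2)) H"
        by (auto simp: S_def Hol_def N_def)
      obtain j k where "(j,k) \<in> Iset" "generate (holomorph (dihedral (p^2))) {g} = generate (holomorph (dihedral (p^2))) {Gel j k}"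
        using S_to_I[OF g] c sr Hg by blast
      then show "H \<in> gen ` Iset" using Hg by (force simp: gen_def)
    qed
  next
    show "gen ` Iset \<subseteq> S"
    proof
      fix H assume "H \<in> gen ` Iset"
      then obtain j k where jk: "(j,k) \<in> Iset" and H: "H = generate (holomorph (dihedral (p^2))) {Gel j k}"
        by (auto simp: gen_def)
      note gg = Gel_good[OF jk]
      have "subgroup H (holomorph (dihedral (p^2)))" unfolding H using gg(1) by (intro HG.generate_is_subgroup) simp
      moreover have "card H = nat (p^2)" unfolding H using HG.generate_pow_card[OF gg(1)] gg(2) by simp
      ultimately show "H \<in> S" using gg(1) gg(3) H by (auto simp: S_def Hol_def N_def)
    qed
  qed
  have "card S = nat (p^3 - p^2)"
    unfolding Seq using card_image[OF Gel_inj] card_Iset nat_count by (simp add: gen_def)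
  then show ?thesis using Seq rhs by simp
qed

end
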